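(* Let $\phi(z)=\sum_{j\in\mathbb{Z}}\phi_jz^j$ with $\sum_j|\phi_j|<\infty$, and set $\phi_+(z)=\sum_{j\ge0}\phi_jz^j$, $\phi_-(z)=\sum_{j<0}\phi_jz^j$. Then for every $t\in\mathbb{C}$ and $n\in\mathbb{N}$, $$\det\left(I+P_n\left(e^{tT(\phi)}-I\right)P_n\right)e^{-t\operatorname{Tr}P_nT(\phi)}=\det\left(I+P_n\left(e^{-tT(\phi_+)}e^{tT(\phi)}e^{-tT(\phi_-)}-I\right)P_n\right).$$
   Context: For a Laurent series $a(z)=\sum_ka_kz^k$, the Toeplitz matrix $T(a)$ on $\ell^2(\mathbb{N})$ has entries $T(a)_{j,k}=a_{j-k}$, $j,k\ge1$. $P_n$ is the orthogonal projection onto the first $n$ coordinates of $\ell^2(\mathbb{N})$. Determinants are Fredholm determinants. *)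

theory Defs
  imports "HOL-Analysis.Infinite_Sum" "Jordan_Normal_Form.Determinant"
begin

text \<open>Bounded operators on l2(N) are represented by their (infinite) matrices
  with respect to the standard basis, indexed from 0 (the paper indexes from 1).
  All operators occurring below (Toeplitz matrices with l1 symbols, their
  exponentials and products) have uniformly l1-bounded rows and columns, so the
  series defining matrix products are absolutely convergent and agree with the
  matrix entries of the operator products.\<close>

type_synonym imat = "nat \<Rightarrow> nat \<Rightarrow> complex"

definition toeplitz :: "(int \<Rightarrow> complex) \<Rightarrow> imat" where
  "toeplitz a j k = a (int j - int k)"

definition imat_id :: imat where
  "imat_id j k = (if j = k then 1 else 0)"

definition imat_mult :: "imat \<Rightarrow> imat \<Rightarrow> imat" where
  "imat_mult A B j k = (\<Sum>l. A j l * B l k)"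

definition imat_scale :: "complex \<Rightarrow> imat \<Rightarrow> imat" where
  "imat_scale c A j k = c * A j k"

primrec imat_pow :: "imat \<Rightarrow> nat \<Rightarrow> imat" where
  "imat_pow A 0 = imat_id"
| "imat_pow A (Suc m) = imat_mult A (imat_pow A m)"

definition imat_exp :: "imat \<Rightarrow> imat" where
  "imat_exp A j k = (\<Sum>m. imat_pow A m j k / of_nat (fact m))"

definition sym_plus :: "(int \<Rightarrow> complex) \<Rightarrow> int \<Rightarrow> complex" where
  "sym_plus \<phi> j = (if 0 \<le> j then \<phi> j else 0)"

definition sym_minus :: "(int \<Rightarrow> complex) \<Rightarrow> int \<Rightarrow> complex" where
  "sym_minus \<phi> j = (if j < 0 then \<phi> j else 0)"

text \<open>Fredholm determinant det(I + P_n (X - I) P_n): the operator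
  P_n (X - I) P_n has finite rank with range in ran P_n, so the Fredholm
  determinant equals the ordinary determinant of the n x n compression
  of I + P_n (X - I) P_n to ran P_n.\<close>
definition fdet_section :: "nat \<Rightarrow> imat \<Rightarrow> complex" where
  "fdet_section n X = det (mat n n (\<lambda>(i, j). imat_id i j + (X i j - imat_id i j)))"

definition trace_section :: "nat \<Rightarrow> imat \<Rightarrow> complex" where
  "trace_section n A = (\<Sum>i<n. A i i)"

end

theory Submission
  imports Defs
begin

definition lowtri :: "imat \<Rightarrow> bool" where
  "lowtri A \<longleftrightarrow> (\<forall>j k. j < k \<longrightarrow> A j k = 0)"

definition uptri :: "imat \<Rightarrow> bool" where
  "uptri A \<longleftrightarrow> (\<forall>j k. k < j \<longrightarrow> A j k = 0)"

lemma mult_low_sum: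
  assumes "lowtri A" "j < N"
  shows "imat_mult A B j k = (\<Sum>l<N. A j l * B l k)"
  unfolding imat_mult_def
  by (rule suminf_finite) (use assms in \<open>auto simp: lowtri_def\<close>)

lemma mult_up_sum:
  assumes "uptri B" "k < N"
  shows "imat_mult A B j k = (\<Sum>l<N. A j l * B l k)"
  unfolding imat_mult_def
  by (rule suminf_finite) (use assms in \<open>auto simp: uptri_def\<close>)

lemma lowtri_mult:
  assumes "lowtri A" "lowtri B"
  shows "lowtri (imat_mult A B)"
  unfolding lowtri_def
proof (intro allI impI)
  fix j k :: nat assume jk: "j < k"
  have "imat_mult A B j k = (\<Sum>l<Suc j. A j l * B l k)"
    by (rule mult_low_sum[OF assms(1)]) auto
  also have "\<dots> = 0"
    using assms jk by (intro sum.neutral) (auto simp: lowtri_def)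
  finally show "imat_mult A B j k = 0" .
qed

lemma lowtri_mult_diag:
  assumes "lowtri A" "lowtri B"
  shows "imat_mult A B j j = A j j * B j j"
proof -
  have "imat_mult A B j j = (\<Sum>l<Suc j. A j l * B l j)"
    by (rule mult_low_sum[OF assms(1)]) auto
  also have "\<dots> = A j j * B j j"
  proof (subst sum.remove[of _ j])
    show "(A j j * B j j + (\<Sum>l\<in>{..<Suc j} - {j}. A j l * B l j)) = A j j * B j j"
      using assms by (subst sum.neutral) (auto simp: lowtri_def)
  qed auto
  finally show ?thesis .
qed

lemma uptri_mult:
  assumes "uptri A" "uptri B"
  shows "uptri (imat_mult A B)"
  unfolding uptri_def
proof (intro allI impI)
  fix j k :: nat assume jk: "k < j"
  have "imat_mult A B j k = (\<Sum>l<Suc k. A j l * B l k)"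
    by (rule mult_up_sum[OF assms(2)]) auto
  also have "\<dots> = 0"
    using assms jk by (intro sum.neutral) (auto simp: uptri_def)
  finally show "imat_mult A B j k = 0" .
qed

lemma uptri_mult_diag:
  assumes "uptri A" "uptri B"
  shows "imat_mult A B j j = A j j * B j j"
proof -
  have "imat_mult A B j j = (\<Sum>l<Suc j. A j l * B l j)"
    by (rule mult_up_sum[OF assms(2)]) auto
  also have "\<dots> = A j j * B j j"
  proof (subst sum.remove[of _ j])
    show "(A j j * B j j + (\<Sum>l\<in>{..<Suc j} - {j}. A j l * B l j)) = A j j * B j j"
      using assms by (subst sum.neutral) (auto simp: uptri_def)
  qed auto
  finally show ?thesis .
qed

lemma lowtri_id: "lowtri imat_id" and uptri_id: "uptri imat_id"
  by (auto simp: lowtri_def uptri_def imat_id_def)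

lemma lowtri_pow: "lowtri A \<Longrightarrow> lowtri (imat_pow A m) \<and> imat_pow A m j j = A j j ^ m"
proof (induction m arbitrary: j)
  case 0 then show ?case by (simp add: lowtri_def imat_id_def)
next
  case (Suc m) then show ?case by (simp add: lowtri_mult lowtri_mult_diag)
qed

lemma uptri_pow: "uptri A \<Longrightarrow> uptri (imat_pow A m) \<and> imat_pow A m j j = A j j ^ m"
proof (induction m arbitrary: j)
  case 0 then show ?case by (simp add: uptri_def imat_id_def)
next
  case (Suc m) then show ?case by (simp add: uptri_mult uptri_mult_diag)
qed

lemma exp_series: "(\<Sum>m. (x::complex) ^ m / of_nat (fact m)) = exp x"
  by (simp add: exp_def scaleR_conv_of_real divide_inverse mult.commute)

lemma exp_series': "(\<Sum>m. (x::complex) ^ m / fact m) = exp x"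
  using exp_series[of x] by simp

lemma lowtri_exp: assumes "lowtri A"
  shows "lowtri (imat_exp A) \<and> imat_exp A j j = exp (A j j)"
  using lowtri_pow[OF assms]
  by (auto simp: lowtri_def imat_exp_def exp_series exp_series')

lemma uptri_exp: assumes "uptri A"
  shows "uptri (imat_exp A) \<and> imat_exp A j j = exp (A j j)"
  using uptri_pow[OF assms]
  by (auto simp: uptri_def imat_exp_def exp_series exp_series')

lemma lowtri_plus: "lowtri (imat_scale c (toeplitz (sym_plus \<phi>)))"
  by (auto simp: lowtri_def imat_scale_def toeplitz_def sym_plus_def)

lemma uptri_minus: "uptri (imat_scale c (toeplitz (sym_minus \<phi>)))"
  by (auto simp: uptri_def imat_scale_def toeplitz_def sym_minus_def)

theorem lemma4p2:
  fixes \<phi> :: "int \<Rightarrow> complex" and t :: complex and n :: nat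
  assumes "(\<lambda>j. norm (\<phi> j)) summable_on UNIV"
  shows "fdet_section n (imat_exp (imat_scale t (toeplitz \<phi>)))
           * exp (- t * trace_section n (toeplitz \<phi>))
         = fdet_section n
             (imat_mult (imat_exp (imat_scale (- t) (toeplitz (sym_plus \<phi>))))
               (imat_mult (imat_exp (imat_scale t (toeplitz \<phi>)))
                          (imat_exp (imat_scale (- t) (toeplitz (sym_minus \<phi>))))))"
proof -
  define L where "L = imat_exp (imat_scale (- t) (toeplitz (sym_plus \<phi>)))"
  define X where "X = imat_exp (imat_scale t (toeplitz \<phi>))"
  define U where "U = imat_exp (imat_scale (- t) (toeplitz (sym_minus \<phi>)))"
  have L: "lowtri L" "\<And>j. L j j = exp (- t * \<phi> 0)"
    using lowtri_exp[OF lowtri_plus[of "-t" \<phi>]]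
    by (auto simp: L_def imat_scale_def toeplitz_def sym_plus_def)
  have U: "uptri U" "\<And>j. U j j = 1"
    using uptri_exp[OF uptri_minus[of "-t" \<phi>]]
    by (auto simp: U_def imat_scale_def toeplitz_def sym_minus_def)
  define Ln where "Ln = mat n n (\<lambda>(i, j). L i j)"
  define Xn where "Xn = mat n n (\<lambda>(i, j). X i j)"
  define Um where "Um = mat n n (\<lambda>(i, j). U i j)"
  have fd: "fdet_section n Y = det (mat n n (\<lambda>(i, j). Y i j))" for Y
    unfolding fdet_section_def by simp
  have eq: "mat n n (\<lambda>(i, j). imat_mult L (imat_mult X U) i j) = Ln * (Xn * Um)"
  proof (rule eq_matI)
    fix i j assume ij: "i < dim_row (Ln * (Xn * Um))" "j < dim_col (Ln * (Xn * Um))"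
    then have i: "i < n" and j: "j < n" by (auto simp: Ln_def Xn_def Um_def)
    have "(Ln * (Xn * Um)) $$ (i, j) = (\<Sum>l<n. L i l * (\<Sum>m<n. X l m * U m j))"
      using i j by (simp add: Ln_def Xn_def Um_def scalar_prod_def lessThan_atLeast0)
    also have "\<dots> = imat_mult L (imat_mult X U) i j"
      using i j by (simp add: mult_low_sum[OF L(1) i] mult_up_sum[OF U(1) j])
    finally show "mat n n (\<lambda>(i, j). imat_mult L (imat_mult X U) i j) $$ (i, j) =
        (Ln * (Xn * Um)) $$ (i, j)" using i j by simp
  qed (auto simp: Ln_def Xn_def Um_def)
  have cL: "Ln \<in> carrier_mat n n" and cX: "Xn \<in> carrier_mat n n" and cU: "Um \<in> carrier_mat n n"
    by (auto simp: Ln_def Xn_def Um_def)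
  have dL: "det Ln = exp (- t * \<phi> 0) ^ n"
  proof -
    have "det Ln = prod_list (diag_mat Ln)"
      by (rule det_lower_triangular[OF _ cL]) (use L in \<open>auto simp: Ln_def lowtri_def\<close>)
    also have "diag_mat Ln = replicate n (exp (- t * \<phi> 0))"
      by (rule nth_equalityI) (auto simp: diag_mat_def Ln_def L(2))
    finally show ?thesis by simp
  qed
  have dU: "det Um = 1"
  proof -
    have "det Um = prod_list (diag_mat Um)"
      by (rule det_upper_triangular[OF _ cU]) (use U in \<open>auto simp: Um_def uptri_def upper_triangular_def\<close>)
    also have "diag_mat Um = replicate n 1"
      by (rule nth_equalityI) (auto simp: diag_mat_def Um_def U(2))
    finally show ?thesis by simp
  qed
  have tr: "trace_section n (toeplitz \<phi>) = of_nat n * \<phi> 0"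
    by (simp add: trace_section_def toeplitz_def)
  have ex: "exp (- t * (of_nat n * \<phi> 0)) = exp (- t * \<phi> 0) ^ n"
    by (subst exp_of_nat_mult[symmetric]) (simp add: algebra_simps)
  have "det (Ln * (Xn * Um)) = det Ln * (det Xn * det Um)"
    using cL cX cU by (simp add: det_mult[OF cL mult_carrier_mat[OF cX cU]] det_mult[OF cX cU])
  then show ?thesis
    unfolding fd L_def[symmetric] X_def[symmetric] U_def[symmetric] eq tr ex
    by (simp add: dL dU Xn_def)
qed

end
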